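(* For all types $\tau_1,\tau_2,\tau_p$ with $\tau_p=\tau_1+\tau_2$, every heap $H$ and value $v$: $\mathrm{own}(H,v,\tau_p)=\mathrm{own}(H,v,\tau_1)+\mathrm{own}(H,v,\tau_2)$.
   Context: Types $\tau ::= \{\nu:\mathtt{int}\mid\varphi\}\mid\tau\ \mathtt{ref}^r$, with $\varphi$ a refinement formula and $r\in[0,1]$ rational. Type addition is the least commutative partial operation satisfying $\{\nu:\mathtt{int}\mid\varphi_1\}+\{\nu:\mathtt{int}\mid\varphi_2\}=\{\nu:\mathtt{int}\mid\varphi_1\wedge\varphi_2\}$ and $\tau_1\ \mathtt{ref}^{r_1}+\tau_2\ \mathtt{ref}^{r_2}=(\tau_1+\tau_2)\ \mathtt{ref}^{r_1+r_2}$. Values: integers or addresses; a heap $H$ is a finite partial map from addresses to values. Ownership maps are functions from addresses to nonnegative rationals, added pointwise; $\{a\mapsto r\}$ maps $a$ to $r$ and everything else to 0; $\emptyset$ is the zero map. $\mathrm{own}(H,v,\tau)=\{a\mapsto r\}+\mathrm{own}(H,H(a),\tau')$ if $v$ is an address $a\in dom(H)$ and $\tau=\tau'\ \mathtt{ref}^r$; otherwise $\mathrm{own}(H,v,\tau)=\emptyset$. *)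

theory Defs
  imports Main "HOL.Rat"
begin

(* Refinement formulas: syntax left abstract (atoms of type 'a), closed under conjunction. *)
datatype 'a form = FAtom 'a | FConj "'a form" "'a form"

(* Types: {nu:int | phi}  and  tau ref^r *)
datatype 'a ty = TInt "'a form" | TRef "'a ty" rat

fun wf_ty :: "'a ty \<Rightarrow> bool" where
  "wf_ty (TInt \<phi>) = True"
| "wf_ty (TRef t r) = (0 \<le> r \<and> r \<le> 1 \<and> wf_ty t)"

(* Type addition: the least commutative partial operation with the two defining equations;
   None means undefined. *)
fun tadd :: "'a ty \<Rightarrow> 'a ty \<Rightarrow> 'a ty option" where
  "tadd (TInt \<phi>1) (TInt \<phi>2) = Some (TInt (FConj \<phi>1 \<phi>2))"
| "tadd (TRef t1 r1) (TRef t2 r2) =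
     (case tadd t1 t2 of None \<Rightarrow> None | Some t \<Rightarrow> Some (TRef t (r1 + r2)))"
| "tadd _ _ = None"

type_synonym addr = nat

datatype val = VInt int | VAddr addr

type_synonym heap = "addr \<rightharpoonup> val"

definition single :: "addr \<Rightarrow> rat \<Rightarrow> (addr \<Rightarrow> rat)" where
  "single a r = (\<lambda>x. if x = a then r else 0)"

fun own :: "heap \<Rightarrow> val \<Rightarrow> 'a ty \<Rightarrow> (addr \<Rightarrow> rat)" where
  "own H (VAddr a) (TRef t r) =
     (case H a of Some w \<Rightarrow> (\<lambda>x. single a r x + own H w t x) | None \<Rightarrow> (\<lambda>_. 0))"
| "own H v t = (\<lambda>_. 0)"

end

theory Submission
  imports Defs
begin

lemma own_add:
  "tadd t1 t2 = Some tp \<Longrightarrow> own H v tp = (\<lambda>a. own H v t1 a + own H v t2 a)"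
proof (induction t1 t2 arbitrary: tp v rule: tadd.induct)
  case (1 \<phi>1 \<phi>2)
  then show ?case by (cases v) auto
next
  case (2 t1 r1 t2 r2)
  then obtain t where t: "tadd t1 t2 = Some t" and tp: "tp = TRef t (r1 + r2)"
    by (auto split: option.splits)
  show ?case
  proof (cases v)
    case (VInt i) then show ?thesis using tp by simp
  next
    case (VAddr a)
    then show ?thesis using tp "2.IH"[OF t]
      by (auto split: option.splits simp: single_def fun_eq_iff algebra_simps)
  qed
qed auto

theorem lemma15:
  fixes \<tau>1 \<tau>2 \<tau>p :: "'a ty" and H :: heap and v :: val
  assumes "wf_ty \<tau>1" and "wf_ty \<tau>2" and "wf_ty \<tau>p"
    and "tadd \<tau>1 \<tau>2 = Some \<tau>p"
  shows "own H v \<tau>p = (\<lambda>a. own H v \<tau>1 a + own H v \<tau>2 a)"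
  using own_add[OF assms(4)] .

end
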